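(* Let $\mathcal{D}\subset\mathbb{R}^d$ be compact, $0<a,b<\infty$, $c:=a+b$, and let $\mathcal{B}=\{\phi_j\}_{j=0}^\infty$ be any orthonormal (Schauder) basis of $\mathbf{L}^2(\mathcal{D})$. Then for every $f\in\mathcal{F}$, every $p_Z\in\mathcal{P}_Z$, every $n\ge1$ and every $m\ge1$, the estimator $\hat f_{n,m}$ satisfies \[ D:=\mathbb{E}\left[\|f-\hat f_{n,m}\|^2\right]\le \frac{c^2}{n}\sum_{j=0}^{m-1}\int_{\mathcal{D}}\frac{|\phi_j(x)|^2}{p_X(x)}\,dx+\varepsilon[f,m,\mathcal{B}], \] where $\varepsilon[f,m,\mathcal{B}]$ is a non-negative sequence in $m$, non-increasing in $m$, which converges to $0$ as $m\to\infty$.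
   Context: $\mathcal{F}$ is the set of all measurable functions $f:\mathcal{D}\to[-a,+a]$ (so $\mathcal{F}\subseteq\mathbf{L}^2(\mathcal{D})$). $p_X$ is a probability density on $\mathcal{D}$ (absolutely continuous w.r.t. Lebesgue measure) whose support is $\mathcal{D}$. $\mathcal{P}_Z$ is the set of all probability distributions on $\mathbb{R}$ with mean zero and support contained in $[-b,+b]$. Given $n$, let $X_1,\dots,X_n$ be i.i.d. with density $p_X$, $Z_1,\dots,Z_n$ i.i.d. with distribution $p_Z$, and $T_1,\dots,T_n$ i.i.d. uniform on $[-c,+c]$, all mutually independent. Let $Y_i=f(X_i)+Z_i$ and $B_i=+1$ if $Y_i>T_i$, $B_i=-1$ if $Y_i\le T_i$. Inner product $\langle g,h\rangle=\int_{\mathcal{D}}g(x)h^*(x)\,dx$, $\|g\|^2=\langle g,g\rangle$; $\alpha_j:=\langle f,\phi_j\rangle$. The estimator is $\hat\alpha_j:=\frac{c}{n}\sum_{i=1}^n\frac{\phi_j^*(X_i)}{p_X(X_i)}B_i$ and $\hat f_{n,m}:=\sum_{j=0}^{m-1}\hat\alpha_j\phi_j$. The $m$-term approximation error is $\varepsilon[f,m,\mathcal{B}]:=\sum_{j=m}^\infty|\langle f,\phi_j\rangle|^2$. The expectation is over the $X_i,Z_i,T_i$. *)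

theory Defs
  imports "HOL-Probability.Probability"
begin

definition LD :: "'a::euclidean_space set \<Rightarrow> 'a measure" where
  "LD D = restrict_space lebesgue D"

definition sq_int :: "'a::euclidean_space set \<Rightarrow> ('a \<Rightarrow> complex) \<Rightarrow> bool" where
  "sq_int D g \<longleftrightarrow> g \<in> borel_measurable (LD D) \<and> integrable (LD D) (\<lambda>x. (cmod (g x))\<^sup>2)"

definition L2_inner :: "'a::euclidean_space set \<Rightarrow> ('a \<Rightarrow> complex) \<Rightarrow> ('a \<Rightarrow> complex) \<Rightarrow> complex" where
  "L2_inner D g h = (\<integral>x. g x * cnj (h x) \<partial>LD D)"

definition orthonormal_basis_L2 :: "'a::euclidean_space set \<Rightarrow> (nat \<Rightarrow> 'a \<Rightarrow> complex) \<Rightarrow> bool" where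
  "orthonormal_basis_L2 D \<phi> \<longleftrightarrow>
     (\<forall>j. sq_int D (\<phi> j)) \<and>
     (\<forall>j k. L2_inner D (\<phi> j) (\<phi> k) = (if j = k then 1 else 0)) \<and>
     (\<forall>g. sq_int D g \<longrightarrow>
        (\<lambda>m. \<integral>x. (cmod (g x - (\<Sum>j<m. L2_inner D g (\<phi> j) * \<phi> j x)))\<^sup>2 \<partial>LD D) \<longlonglongrightarrow> 0)"

definition coef :: "'a::euclidean_space set \<Rightarrow> (nat \<Rightarrow> 'a \<Rightarrow> complex) \<Rightarrow> ('a \<Rightarrow> real) \<Rightarrow> nat \<Rightarrow> complex" where
  "coef D \<phi> f j = L2_inner D (\<lambda>x. complex_of_real (f x)) (\<phi> j)"

definition approx_err :: "'a::euclidean_space set \<Rightarrow> (nat \<Rightarrow> 'a \<Rightarrow> complex) \<Rightarrow> ('a \<Rightarrow> real) \<Rightarrow> nat \<Rightarrow> real" where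
  "approx_err D \<phi> f m = (\<Sum>j. (cmod (coef D \<phi> f (j + m)))\<^sup>2)"

text \<open>Distribution of one sample (X_i, Z_i, T_i): X has density pX on D, Z ~ pZ,
  T uniform on [-c,c]; all independent.\<close>
definition sample_measure :: "'a::euclidean_space set \<Rightarrow> ('a \<Rightarrow> real) \<Rightarrow> real measure \<Rightarrow> real
     \<Rightarrow> ('a \<times> real \<times> real) measure" where
  "sample_measure D pX pZ c =
     density (LD D) (\<lambda>x. ennreal (pX x)) \<Otimes>\<^sub>M (pZ \<Otimes>\<^sub>M uniform_measure lborel {-c..c})"

definition data_measure :: "'a::euclidean_space set \<Rightarrow> ('a \<Rightarrow> real) \<Rightarrow> real measure \<Rightarrow> real \<Rightarrow> nat
     \<Rightarrow> (nat \<Rightarrow> 'a \<times> real \<times> real) measure" where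
  "data_measure D pX pZ c n = PiM {..<n} (\<lambda>_. sample_measure D pX pZ c)"

definition bit :: "('a \<Rightarrow> real) \<Rightarrow> 'a \<times> real \<times> real \<Rightarrow> real" where
  "bit f s = (case s of (x, z, t) \<Rightarrow> if f x + z > t then 1 else -1)"

definition coef_hat :: "real \<Rightarrow> nat \<Rightarrow> (nat \<Rightarrow> 'a \<Rightarrow> complex) \<Rightarrow> ('a \<Rightarrow> real) \<Rightarrow> ('a \<Rightarrow> real)
     \<Rightarrow> (nat \<Rightarrow> 'a \<times> real \<times> real) \<Rightarrow> nat \<Rightarrow> complex" where
  "coef_hat c n \<phi> pX f \<omega> j =
     complex_of_real (c / real n) *
       (\<Sum>i<n. cnj (\<phi> j (fst (\<omega> i))) / complex_of_real (pX (fst (\<omega> i)))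
                 * complex_of_real (bit f (\<omega> i)))"

definition f_hat :: "real \<Rightarrow> nat \<Rightarrow> nat \<Rightarrow> (nat \<Rightarrow> 'a \<Rightarrow> complex) \<Rightarrow> ('a \<Rightarrow> real) \<Rightarrow> ('a \<Rightarrow> real)
     \<Rightarrow> (nat \<Rightarrow> 'a \<times> real \<times> real) \<Rightarrow> 'a \<Rightarrow> complex" where
  "f_hat c n m \<phi> pX f \<omega> x = (\<Sum>j<m. coef_hat c n \<phi> pX f \<omega> j * \<phi> j x)"

end

theory Submission
  imports Defs
begin


lemma prod_two:
  fixes u :: "'b \<Rightarrow> real" and i k n :: nat
  assumes "i < n" "k < n"
  shows "(\<Prod>l\<in>{..<n}. (if l = i \<and> l = k then (\<lambda>s. (u s)^2) else if l = i \<or> l = k then u else (\<lambda>_. 1)) (x l))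
     = u (x i) * u (x k)"
proof -
  have "(\<Prod>l\<in>{..<n}. (if l = i \<and> l = k then (\<lambda>s. (u s)^2) else if l = i \<or> l = k then u else (\<lambda>_. 1)) (x l))
     = (\<Prod>l\<in>{i,k}. (if l = i \<and> l = k then (\<lambda>s. (u s)^2) else if l = i \<or> l = k then u else (\<lambda>_. 1)) (x l))"
    using assms by (intro prod.mono_neutral_right) auto
  also have "\<dots> = u (x i) * u (x k)"
    by (cases "i = k") (auto simp: power2_eq_square)
  finally show ?thesis .
qed

lemma real_var:
  fixes M :: "'b measure" and v :: "'b \<Rightarrow> real"
  assumes M: "prob_space M" and vm: "v \<in> borel_measurable M" and v2: "integrable M (\<lambda>s. (v s)^2)"
  shows "integrable (PiM {..<n} (\<lambda>_. M)) (\<lambda>\<omega>. (\<Sum>i<n. v (\<omega> i) - (\<integral>s. v s \<partial>M))^2)"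
    and "(\<integral>\<omega>. (\<Sum>i<n. v (\<omega> i) - (\<integral>s. v s \<partial>M))^2 \<partial>PiM {..<n} (\<lambda>_. M))
          = real n * (\<integral>s. (v s - (\<integral>s. v s \<partial>M))^2 \<partial>M)"
proof -
  interpret M: prob_space M by fact
  interpret P: product_prob_space "\<lambda>_::nat. M"
    by (simp add: product_prob_space_def product_prob_space_axioms_def product_sigma_finite_def M.prob_space_axioms M.sigma_finite_measure)
  define \<mu> where "\<mu> = (\<integral>s. v s \<partial>M)"
  define u where "u s = v s - \<mu>" for s
  have v1: "integrable M v"
    using M.square_integrable_imp_integrable[OF vm v2] .
  have u1: "integrable M u" unfolding u_def using v1 by auto
  have u2: "integrable M (\<lambda>s. (u s)^2)"
    unfolding u_def power2_diff using v1 v2 by auto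
  have u0: "(\<integral>s. u s \<partial>M) = 0" unfolding u_def \<mu>_def using v1 by (simp add: M.prob_space)
  define g where "g i k l = (if l = i \<and> l = k then (\<lambda>s. (u s)^2) else if l = i \<or> l = k then u else (\<lambda>_. 1::real))" for i k l :: nat
  have gint: "integrable M (g i k l)" for i k l
    unfolding g_def using u1 u2 by auto
  have eq: "(\<lambda>\<omega>. u (\<omega> i) * u (\<omega> k)) = (\<lambda>\<omega>. \<Prod>l\<in>{..<n}. g i k l (\<omega> l))" if "i < n" "k < n" for i k
    unfolding g_def by (simp add: prod_two[OF that] fun_eq_iff)
  have int_ik: "integrable (PiM {..<n} (\<lambda>_. M)) (\<lambda>\<omega>. u (\<omega> i) * u (\<omega> k))" if "i < n" "k < n" for i k
    unfolding eq[OF that] by (rule P.product_integrable_prod) (auto intro: gint)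
  have val_ik: "(\<integral>\<omega>. u (\<omega> i) * u (\<omega> k) \<partial>PiM {..<n} (\<lambda>_. M)) = (if i = k then (\<integral>s. (u s)^2 \<partial>M) else 0)"
    if "i < n" "k < n" for i k
  proof -
    have "(\<integral>\<omega>. u (\<omega> i) * u (\<omega> k) \<partial>PiM {..<n} (\<lambda>_. M)) = (\<Prod>l\<in>{..<n}. integral\<^sup>L M (g i k l))"
      unfolding eq[OF that] by (rule P.product_integral_prod) (auto intro: gint)
    also have "\<dots> = (\<Prod>l\<in>{i,k}. integral\<^sup>L M (g i k l))"
      using that by (intro prod.mono_neutral_right) (auto simp: g_def M.prob_space)
    also have "\<dots> = (if i = k then (\<integral>s. (u s)^2 \<partial>M) else 0)"
      by (cases "i = k") (auto simp: g_def u0)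
    finally show ?thesis .
  qed
  have sq: "(\<Sum>i<n. v (\<omega> i) - \<mu>)^2 = (\<Sum>i<n. \<Sum>k<n. u (\<omega> i) * u (\<omega> k))" for \<omega>
    unfolding u_def power2_eq_square sum_product by simp
  show "integrable (PiM {..<n} (\<lambda>_. M)) (\<lambda>\<omega>. (\<Sum>i<n. v (\<omega> i) - (\<integral>s. v s \<partial>M))^2)"
    unfolding \<mu>_def[symmetric] sq by (auto intro!: integrable_sum int_ik)
  have "(\<integral>\<omega>. (\<Sum>i<n. v (\<omega> i) - \<mu>)^2 \<partial>PiM {..<n} (\<lambda>_. M))
       = (\<Sum>i<n. \<Sum>k<n. (\<integral>\<omega>. u (\<omega> i) * u (\<omega> k) \<partial>PiM {..<n} (\<lambda>_. M)))"
    unfolding sq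
    apply (subst Bochner_Integration.integral_sum)
     apply (auto intro!: integrable_sum int_ik)[1]
    apply (rule sum.cong, simp)
    apply (subst Bochner_Integration.integral_sum)
     apply (auto intro!: int_ik)
    done
  also have "\<dots> = (\<Sum>i<n. \<integral>s. (u s)^2 \<partial>M)"
    by (auto simp: val_ik intro!: sum.cong)
  finally show "(\<integral>\<omega>. (\<Sum>i<n. v (\<omega> i) - (\<integral>s. v s \<partial>M))^2 \<partial>PiM {..<n} (\<lambda>_. M))
          = real n * (\<integral>s. (v s - (\<integral>s. v s \<partial>M))^2 \<partial>M)"
    unfolding \<mu>_def[symmetric] u_def by simp
qed

lemma var_le:
  fixes v :: "'b \<Rightarrow> real"
  assumes M: "prob_space M" and vm: "v \<in> borel_measurable M" and v2: "integrable M (\<lambda>s. (v s)^2)"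
  shows "(\<integral>s. (v s - (\<integral>s. v s \<partial>M))^2 \<partial>M) \<le> (\<integral>s. (v s)^2 \<partial>M)"
proof -
  interpret M: prob_space M by fact
  have v1: "integrable M v"
    using M.square_integrable_imp_integrable[OF vm v2] .
  have "(\<integral>s. (v s - (\<integral>s. v s \<partial>M))^2 \<partial>M) = (\<integral>s. (v s)^2 \<partial>M) - (\<integral>s. v s \<partial>M)^2"
    using M.variance_eq[OF v1 v2] by simp
  then show ?thesis by simp
qed

lemma cvar:
  fixes w :: "'b \<Rightarrow> complex"
  assumes M: "prob_space M" and wm: "w \<in> borel_measurable M"
    and w2: "integrable M (\<lambda>s. (cmod (w s))^2)" and n: "n \<ge> 1"
  shows "(\<integral>\<^sup>+\<omega>. ennreal ((cmod ((\<integral>s. w s \<partial>M) - of_real (1 / real n) * (\<Sum>i<n. w (\<omega> i))))^2) \<partial>PiM {..<n} (\<lambda>_. M))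
     \<le> ennreal ((1 / real n) * (\<integral>s. (cmod (w s))^2 \<partial>M))"
proof -
  interpret M: prob_space M by fact
  define P where "P = PiM {..<n} (\<lambda>_. M)"
  define vr where "vr s = Re (w s)" for s
  define vi where "vi s = Im (w s)" for s
  have vrm: "vr \<in> borel_measurable M" and vim: "vi \<in> borel_measurable M"
    unfolding vr_def vi_def using wm by auto
  have vr2: "integrable M (\<lambda>s. (vr s)^2)"
    by (rule Bochner_Integration.integrable_bound[OF w2]) (auto simp: vr_def cmod_def intro!: AE_I2 borel_measurable_power vrm[unfolded vr_def])
  have vi2: "integrable M (\<lambda>s. (vi s)^2)"
    by (rule Bochner_Integration.integrable_bound[OF w2]) (auto simp: vi_def cmod_def intro!: AE_I2 borel_measurable_power vim[unfolded vi_def])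
  have w1: "integrable M w"
  proof (rule Bochner_Integration.integrable_bound[of M "\<lambda>s. 1 + (cmod (w s))^2"])
    show "integrable M (\<lambda>s. 1 + (cmod (w s))^2)" using w2 by auto
    show "w \<in> borel_measurable M" by fact
    have "norm (w s) \<le> norm (1 + (cmod (w s))^2)" for s
    proof (cases "cmod (w s) \<le> 1")
      case True then show ?thesis by (simp add: power2_eq_square) (smt (verit) norm_ge_zero zero_le_mult_iff)
    next
      case False then show ?thesis using mult_right_mono[of 1 "cmod (w s)" "cmod (w s)"] by (simp add: power2_eq_square)
    qed
    then show "AE x in M. norm (w x) \<le> norm (1 + (cmod (w x))^2)" by auto
  qed
  have mr: "(\<integral>s. vr s \<partial>M) = Re (\<integral>s. w s \<partial>M)" unfolding vr_def by (simp add: w1)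
  have mi: "(\<integral>s. vi s \<partial>M) = Im (\<integral>s. w s \<partial>M)" unfolding vi_def by (simp add: w1)
  define A where "A \<omega> = (\<Sum>i<n. vr (\<omega> i) - (\<integral>s. vr s \<partial>M))^2" for \<omega>
  define B where "B \<omega> = (\<Sum>i<n. vi (\<omega> i) - (\<integral>s. vi s \<partial>M))^2" for \<omega>
  have Ai: "integrable P A" unfolding A_def P_def by (rule real_var(1)[OF M vrm vr2])
  have Bi: "integrable P B" unfolding B_def P_def by (rule real_var(1)[OF M vim vi2])
  have nz: "real n \<noteq> 0" using n by simp
  have pt: "(cmod ((\<integral>s. w s \<partial>M) - of_real (1 / real n) * (\<Sum>i<n. w (\<omega> i))))^2
        = (1 / real n)^2 * (A \<omega> + B \<omega>)" for \<omega>
  proof -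
    have "(cmod ((\<integral>s. w s \<partial>M) - of_real (1 / real n) * (\<Sum>i<n. w (\<omega> i))))^2
       = (Re (\<integral>s. w s \<partial>M) - (1 / real n) * (\<Sum>i<n. vr (\<omega> i)))^2
         + (Im (\<integral>s. w s \<partial>M) - (1 / real n) * (\<Sum>i<n. vi (\<omega> i)))^2"
      unfolding cmod_power2 vr_def vi_def by (simp add: Re_sum Im_sum)
    also have "\<dots> = (1 / real n)^2 * (A \<omega> + B \<omega>)"
      unfolding A_def B_def mr mi sum_subtractf using nz
      by (simp add: power2_eq_square field_simps)
    finally show ?thesis .
  qed
  have "(\<integral>\<^sup>+\<omega>. ennreal ((cmod ((\<integral>s. w s \<partial>M) - of_real (1 / real n) * (\<Sum>i<n. w (\<omega> i))))^2) \<partial>P)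
      = (\<integral>\<^sup>+\<omega>. ennreal ((1 / real n)^2 * (A \<omega> + B \<omega>)) \<partial>P)"
    by (simp only: pt)
  also have "\<dots> = ennreal (\<integral>\<omega>. (1 / real n)^2 * (A \<omega> + B \<omega>) \<partial>P)"
    by (intro nn_integral_eq_integral integrable_mult_right Bochner_Integration.integrable_add Ai Bi AE_I2)
      (auto simp: A_def B_def)
  also have "(\<integral>\<omega>. (1 / real n)^2 * (A \<omega> + B \<omega>) \<partial>P)
      = (1 / real n)^2 * (real n * (\<integral>s. (vr s - (\<integral>s. vr s \<partial>M))^2 \<partial>M) + real n * (\<integral>s. (vi s - (\<integral>s. vi s \<partial>M))^2 \<partial>M))"
    using Ai Bi unfolding A_def B_def P_def
    by (simp add: real_var(2)[OF M vrm vr2] real_var(2)[OF M vim vi2])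
  also have "\<dots> \<le> (1 / real n)^2 * (real n * (\<integral>s. (vr s)^2 \<partial>M) + real n * (\<integral>s. (vi s)^2 \<partial>M))"
    using var_le[OF M vrm vr2] var_le[OF M vim vi2]
    by (intro mult_left_mono add_mono) auto
  also have "\<dots> = (1 / real n) * (\<integral>s. (cmod (w s))^2 \<partial>M)"
    using nz vr2 vi2 unfolding cmod_power2 vr_def vi_def
    by (simp add: power2_eq_square field_simps)
  finally show ?thesis unfolding P_def by (simp add: ennreal_leI)
qed



lemma sq_int_meas: "sq_int D g \<Longrightarrow> g \<in> borel_measurable (LD D)"
  and sq_int_int: "sq_int D g \<Longrightarrow> integrable (LD D) (\<lambda>x. (cmod (g x))\<^sup>2)"
  by (auto simp: sq_int_def)

lemma borel_measurable_cnj[measurable]: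
  "f \<in> borel_measurable M \<Longrightarrow> (\<lambda>x. cnj (f x)) \<in> borel_measurable M"
  by (rule borel_measurable_continuous_on[OF linear_continuous_on[OF bounded_linear_cnj]])

lemma ab_le2: "2 * (a::real) * b \<le> a^2 + b^2"
proof -
  have "0 \<le> (a - b)^2" by simp
  then show ?thesis by (simp add: power2_diff)
qed

lemma ab_le: "0 \<le> (a::real) \<Longrightarrow> 0 \<le> b \<Longrightarrow> a * b \<le> a^2 + b^2"
  using ab_le2[of a b] mult_nonneg_nonneg[of a b] by linarith

lemma sq_int_prod:
  assumes "sq_int D g" "sq_int D h"
  shows "integrable (LD D) (\<lambda>x. g x * cnj (h x))"
proof (rule Bochner_Integration.integrable_bound[of _ "\<lambda>x. (cmod (g x))\<^sup>2 + (cmod (h x))\<^sup>2"])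
  show "integrable (LD D) (\<lambda>x. (cmod (g x))\<^sup>2 + (cmod (h x))\<^sup>2)"
    using assms by (auto simp: sq_int_def)
  have [measurable]: "g \<in> borel_measurable (LD D)" "h \<in> borel_measurable (LD D)"
    using assms by (auto simp: sq_int_def)
  show "(\<lambda>x. g x * cnj (h x)) \<in> borel_measurable (LD D)"
    by measurable
  show "AE x in LD D. norm (g x * cnj (h x)) \<le> norm ((cmod (g x))\<^sup>2 + (cmod (h x))\<^sup>2)"
    by (intro AE_I2) (simp add: norm_mult ab_le)
qed

lemma sq_int_add:
  assumes "sq_int D g" "sq_int D h"
  shows "sq_int D (\<lambda>x. g x + h x)"
  unfolding sq_int_def
proof
  show "(\<lambda>x. g x + h x) \<in> borel_measurable (LD D)" using assms by (auto simp: sq_int_def)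
  show "integrable (LD D) (\<lambda>x. (cmod (g x + h x))\<^sup>2)"
  proof (rule Bochner_Integration.integrable_bound[of _ "\<lambda>x. 2 * (cmod (g x))\<^sup>2 + 2 * (cmod (h x))\<^sup>2"])
    show "integrable (LD D) (\<lambda>x. 2 * (cmod (g x))\<^sup>2 + 2 * (cmod (h x))\<^sup>2)"
      using assms by (auto simp: sq_int_def)
    show "(\<lambda>x. (cmod (g x + h x))\<^sup>2) \<in> borel_measurable (LD D)"
      using assms by (auto simp: sq_int_def)
    have "(cmod (g x + h x))\<^sup>2 \<le> 2 * (cmod (g x))\<^sup>2 + 2 * (cmod (h x))\<^sup>2" for x
    proof -
      have "cmod (g x + h x) \<le> cmod (g x) + cmod (h x)" by (rule norm_triangle_ineq)
      then have "(cmod (g x + h x))\<^sup>2 \<le> (cmod (g x) + cmod (h x))\<^sup>2"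
        by (intro power_mono) auto
      also have "\<dots> \<le> 2 * (cmod (g x))\<^sup>2 + 2 * (cmod (h x))\<^sup>2"
        using ab_le2[of "cmod (g x)" "cmod (h x)"] by (simp add: power2_sum)
      finally show ?thesis .
    qed
    then show "AE x in LD D. norm ((cmod (g x + h x))\<^sup>2) \<le> norm (2 * (cmod (g x))\<^sup>2 + 2 * (cmod (h x))\<^sup>2)"
      by auto
  qed
qed

lemma sq_int_cmult:
  assumes "sq_int D g"
  shows "sq_int D (\<lambda>x. c * g x)"
  using assms by (auto simp: sq_int_def norm_mult power_mult_distrib)

lemma sq_int_zero: "sq_int D (\<lambda>x. 0)"
  by (simp add: sq_int_def)

lemma sq_int_sum:
  assumes "\<And>j. j \<in> J \<Longrightarrow> sq_int D (g j)"
  shows "sq_int D (\<lambda>x. \<Sum>j\<in>J. c j * g j x)"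
  using assms
proof (induction J rule: infinite_finite_induct)
  case (infinite A) then show ?case by (simp add: sq_int_zero)
next
  case empty then show ?case by (simp add: sq_int_zero)
next
  case (insert j J)
  then show ?case by (simp add: sq_int_add sq_int_cmult)
qed

lemma sq_int_diff:
  assumes "sq_int D g" "sq_int D h"
  shows "sq_int D (\<lambda>x. g x - h x)"
  using sq_int_add[OF assms(1) sq_int_cmult[OF assms(2), of "-1"]] by simp

lemma ip_cnj: "L2_inner D h g = cnj (L2_inner D g h)"
  unfolding L2_inner_def Bochner_Integration.integral_cnj[symmetric] by (simp add: mult.commute)

lemma ip_diff_left:
  assumes "sq_int D g" "sq_int D h" "sq_int D k"
  shows "L2_inner D (\<lambda>x. g x - h x) k = L2_inner D g k - L2_inner D h k"
  unfolding L2_inner_def using sq_int_prod[OF assms(1,3)] sq_int_prod[OF assms(2,3)]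
  by (simp add: left_diff_distrib)

lemma ip_diff_right:
  assumes "sq_int D g" "sq_int D h" "sq_int D k"
  shows "L2_inner D k (\<lambda>x. g x - h x) = L2_inner D k g - L2_inner D k h"
  by (subst (1 2 3) ip_cnj) (simp add: ip_diff_left[OF assms])

lemma ip_sum_left:
  assumes "\<And>j. j \<in> J \<Longrightarrow> sq_int D (g j)" "sq_int D h" "finite J"
  shows "L2_inner D (\<lambda>x. \<Sum>j\<in>J. c j * g j x) h = (\<Sum>j\<in>J. c j * L2_inner D (g j) h)"
proof -
  have "L2_inner D (\<lambda>x. \<Sum>j\<in>J. c j * g j x) h = (\<integral>x. (\<Sum>j\<in>J. c j * (g j x * cnj (h x))) \<partial>LD D)"
    unfolding L2_inner_def by (simp add: sum_distrib_right mult.assoc)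
  also have "\<dots> = (\<Sum>j\<in>J. c j * L2_inner D (g j) h)"
    unfolding L2_inner_def using assms sq_int_prod
    by (subst Bochner_Integration.integral_sum) (auto intro!: integrable_mult_right)
  finally show ?thesis .
qed

lemma ip_sum_right:
  assumes "\<And>j. j \<in> J \<Longrightarrow> sq_int D (g j)" "sq_int D h" "finite J"
  shows "L2_inner D h (\<lambda>x. \<Sum>j\<in>J. c j * g j x) = (\<Sum>j\<in>J. cnj (c j) * L2_inner D h (g j))"
  using ip_sum_left[OF assms] by (subst ip_cnj) (simp add: ip_cnj[of D h])

lemma ip_self:
  assumes "sq_int D g"
  shows "L2_inner D g g = of_real (\<integral>x. (cmod (g x))\<^sup>2 \<partial>LD D)"
proof -
  have eq: "(\<lambda>x. g x * cnj (g x)) = (\<lambda>x. of_real ((cmod (g x))\<^sup>2))"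
    by (rule ext) (rule complex_norm_square[symmetric])
  show ?thesis unfolding L2_inner_def eq
    by (rule integral_bounded_linear[OF bounded_linear_of_real sq_int_int[OF assms]])
qed



lemma ip_basis_sum:
  assumes ob: "orthonormal_basis_L2 D \<phi>"
  shows "L2_inner D (\<phi> j) (\<lambda>x. \<Sum>k<m. \<beta> k * \<phi> k x) = (if j < m then cnj (\<beta> j) else 0)"
proof -
  have sq: "\<And>k. sq_int D (\<phi> k)" and on: "\<And>j k. L2_inner D (\<phi> j) (\<phi> k) = (if j = k then 1 else 0)"
    using ob by (auto simp: orthonormal_basis_L2_def)
  have "L2_inner D (\<phi> j) (\<lambda>x. \<Sum>k<m. \<beta> k * \<phi> k x) = (\<Sum>k<m. cnj (\<beta> k) * L2_inner D (\<phi> j) (\<phi> k))"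
    by (rule ip_sum_right) (auto simp: sq)
  also have "\<dots> = (\<Sum>k<m. if k = j then cnj (\<beta> k) else 0)"
    by (intro sum.cong refl) (simp add: on)
  also have "\<dots> = (if j < m then cnj (\<beta> j) else 0)"
    by (simp add: sum.delta)
  finally show ?thesis .
qed

lemma key:
  assumes ob: "orthonormal_basis_L2 D \<phi>" and F: "sq_int D (\<lambda>x. of_real (f x))"
  shows "(\<integral>x. (cmod (of_real (f x) - (\<Sum>j<m. \<beta> j * \<phi> j x)))\<^sup>2 \<partial>LD D)
    = (\<integral>x. (cmod (of_real (f x) :: complex))\<^sup>2 \<partial>LD D) - (\<Sum>j<m. (cmod (coef D \<phi> f j))\<^sup>2)
      + (\<Sum>j<m. (cmod (coef D \<phi> f j - \<beta> j))\<^sup>2)"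
proof -
  have sq: "\<And>k. sq_int D (\<phi> k)"
    using ob by (auto simp: orthonormal_basis_L2_def)
  define Fc where "Fc = (\<lambda>x. complex_of_real (f x))"
  define S where "S = (\<lambda>x. \<Sum>j<m. \<beta> j * \<phi> j x)"
  define \<alpha> where "\<alpha> j = coef D \<phi> f j" for j
  have Fs: "sq_int D Fc" using F unfolding Fc_def .
  have Ss: "sq_int D S" unfolding S_def by (rule sq_int_sum) (simp add: sq)
  have Rs: "sq_int D (\<lambda>x. Fc x - S x)" by (rule sq_int_diff[OF Fs Ss])
  have a: "L2_inner D Fc (\<phi> j) = \<alpha> j" for j unfolding \<alpha>_def coef_def Fc_def ..
  have FS: "L2_inner D Fc S = (\<Sum>j<m. cnj (\<beta> j) * \<alpha> j)"
    unfolding S_def by (subst ip_sum_right) (auto simp: sq Fs a)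
  have SF: "L2_inner D S Fc = (\<Sum>j<m. \<beta> j * cnj (\<alpha> j))"
    unfolding S_def by (subst ip_sum_left) (auto simp: sq Fs a ip_cnj[of D _ Fc])
  have SS: "L2_inner D S S = (\<Sum>j<m. \<beta> j * cnj (\<beta> j))"
  proof -
    have "L2_inner D S S = (\<Sum>j<m. \<beta> j * L2_inner D (\<phi> j) S)"
      by (subst (1) S_def, rule ip_sum_left) (auto simp: sq Ss)
    also have "\<dots> = (\<Sum>j<m. \<beta> j * cnj (\<beta> j))"
      unfolding S_def by (auto simp: ip_basis_sum[OF ob] intro!: sum.cong)
    finally show ?thesis .
  qed
  have "complex_of_real (\<integral>x. (cmod (Fc x - S x))\<^sup>2 \<partial>LD D) = L2_inner D (\<lambda>x. Fc x - S x) (\<lambda>x. Fc x - S x)"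
    by (rule ip_self[OF Rs, symmetric])
  also have "\<dots> = L2_inner D Fc Fc - L2_inner D Fc S - (L2_inner D S Fc - L2_inner D S S)"
    by (simp add: ip_diff_left[OF Fs Ss Rs] ip_diff_right[OF Fs Ss Fs] ip_diff_right[OF Fs Ss Ss])
  also have "\<dots> = complex_of_real (\<integral>x. (cmod (Fc x))\<^sup>2 \<partial>LD D) - (\<Sum>j<m. \<alpha> j * cnj (\<alpha> j))
      + (\<Sum>j<m. (\<alpha> j - \<beta> j) * cnj (\<alpha> j - \<beta> j))"
    unfolding FS SF SS ip_self[OF Fs]
    by (simp add: algebra_simps sum.distrib sum_subtractf)
  also have "\<dots> = complex_of_real ((\<integral>x. (cmod (Fc x))\<^sup>2 \<partial>LD D) - (\<Sum>j<m. (cmod (\<alpha> j))\<^sup>2)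
      + (\<Sum>j<m. (cmod (\<alpha> j - \<beta> j))\<^sup>2))"
    by (simp only: of_real_add of_real_diff of_real_sum complex_norm_square)
  finally show ?thesis
    unfolding Fc_def S_def \<alpha>_def of_real_eq_iff .
qed



lemma LD_facts:
  assumes "compact D"
  shows "space (LD D) = D" "finite_measure (LD D)" "D \<in> sets lebesgue"
proof -
  have Dl: "D \<in> lmeasurable" by (rule lmeasurable_compact[OF assms])
  then show D: "D \<in> sets lebesgue" by (simp add: fmeasurable_def)
  show sp: "space (LD D) = D" by (simp add: LD_def space_restrict_space)
  show "finite_measure (LD D)"
  proof (rule finite_measureI)
    have "emeasure (LD D) (space (LD D)) = emeasure lebesgue D"
      unfolding sp LD_def using D by (simp add: emeasure_restrict_space)
    also have "\<dots> < \<infinity>" using Dl unfolding fmeasurable_def by blast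
    finally show "emeasure (LD D) (space (LD D)) \<noteq> \<infinity>" by simp
  qed
qed

lemma F_sq_int:
  assumes "compact D" "f \<in> borel_measurable (LD D)" "\<forall>x\<in>D. \<bar>f x\<bar> \<le> a"
  shows "sq_int D (\<lambda>x. complex_of_real (f x))"
proof -
  interpret finite_measure "LD D" using LD_facts(2)[OF assms(1)] .
  show ?thesis unfolding sq_int_def
  proof
    show "(\<lambda>x. complex_of_real (f x)) \<in> borel_measurable (LD D)" using assms(2) by simp
    show "integrable (LD D) (\<lambda>x. (cmod (complex_of_real (f x)))\<^sup>2)"
    proof (rule integrable_const_bound[where B="a^2"])
      have "(f x)^2 \<le> a^2" if "x \<in> D" for x
        using power_mono[of "\<bar>f x\<bar>" a 2] assms(3) that by simp
      then show "AE x in LD D. norm ((cmod (complex_of_real (f x)))\<^sup>2) \<le> a^2"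
        using LD_facts(1)[OF assms(1)] by (intro AE_I2) auto
      show "(\<lambda>x. (cmod (complex_of_real (f x)))\<^sup>2) \<in> borel_measurable (LD D)" using assms(2) by simp
    qed
  qed
qed

lemma parseval:
  assumes ob: "orthonormal_basis_L2 D \<phi>" and F: "sq_int D (\<lambda>x. of_real (f x))"
  defines "N \<equiv> (\<integral>x. (cmod (of_real (f x) :: complex))\<^sup>2 \<partial>LD D)"
  shows "approx_err D \<phi> f k = N - (\<Sum>j<k. (cmod (coef D \<phi> f j))\<^sup>2)"
    and "approx_err D \<phi> f \<longlonglongrightarrow> 0"
proof -
  have E: "(\<integral>x. (cmod (of_real (f x) - (\<Sum>j<k. coef D \<phi> f j * \<phi> j x)))\<^sup>2 \<partial>LD D)
       = N - (\<Sum>j<k. (cmod (coef D \<phi> f j))\<^sup>2)" for k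
    using key[OF ob F, where m=k and \<beta>="coef D \<phi> f"] unfolding N_def by simp
  note c0 = conjunct2[OF conjunct2[OF ob[unfolded orthonormal_basis_L2_def]], rule_format, OF F]
  have lim: "(\<lambda>k. N - (\<Sum>j<k. (cmod (coef D \<phi> f j))\<^sup>2)) \<longlonglongrightarrow> 0"
    using c0[folded coef_def, unfolded E] .
  have "(\<lambda>k. N - (N - (\<Sum>j<k. (cmod (coef D \<phi> f j))\<^sup>2))) \<longlonglongrightarrow> N - 0"
    by (intro tendsto_diff tendsto_const lim)
  then have S: "(\<lambda>j. (cmod (coef D \<phi> f j))\<^sup>2) sums N"
    by (simp add: sums_def)
  have ae: "approx_err D \<phi> f k = N - (\<Sum>j<k. (cmod (coef D \<phi> f j))\<^sup>2)" for k
    unfolding approx_err_def by (rule sums_unique[symmetric, OF sums_split_initial_segment[OF S]])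
  then show "approx_err D \<phi> f k = N - (\<Sum>j<k. (cmod (coef D \<phi> f j))\<^sup>2)" .
  show "approx_err D \<phi> f \<longlonglongrightarrow> 0"
    unfolding ae by (rule lim)
qed



lemma unif_prob: "(c::real) > 0 \<Longrightarrow> prob_space (uniform_measure lborel {-c..c})"
  by (intro prob_space_uniform_measure) auto

lemma unif_bit:
  assumes c: "(c::real) > 0" and y: "-c \<le> y" "y \<le> c"
  shows "(\<integral>t. (if y > t then 1 else -1::real) \<partial>uniform_measure lborel {-c..c}) = y / c"
proof -
  define U where "U = uniform_measure lborel {-c..c}"
  interpret U: prob_space U unfolding U_def using unif_prob[OF c] .
  have eq: "(\<lambda>t. (if y > t then 1 else -1::real)) = (\<lambda>t. 2 * indicator {..<y} t - 1)"
    by (auto simp: indicator_def fun_eq_iff)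
  have m: "measure U {..<y} = (y + c) / (2 * c)"
  proof -
    have "{-c..c} \<inter> {..<y} = {-c..<y}" using y by auto
    then show ?thesis unfolding U_def using c y
      by (subst measure_uniform_measure) auto
  qed
  have "(\<integral>t. (if y > t then 1 else -1::real) \<partial>U) = 2 * measure U {..<y} - 1"
  proof -
    have i: "integrable U (indicator {..<y} :: real \<Rightarrow> real)"
      by (rule U.integrable_const_bound[where B=1]) (auto simp: indicator_def U_def)
    have "(\<integral>t. 2 * indicator {..<y} t - 1 \<partial>U) = (\<integral>t. 2 * indicator {..<y} t \<partial>U) - (\<integral>t. 1 \<partial>U :: real)"
      using i by (intro Bochner_Integration.integral_diff) auto
    also have "\<dots> = 2 * measure U {..<y} - 1"
    proof -
      have sp: "space U = UNIV" by (simp add: U_def)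
      show ?thesis using U.prob_space by (simp add: sp)
    qed
    finally show ?thesis unfolding eq .
  qed
  also have "\<dots> = y / c" unfolding m using c by (simp add: field_simps)
  finally show ?thesis unfolding U_def .
qed

lemma bit_eq: "bit f (x, z, t) = (if f x + z > t then 1 else -1)"
  by (simp add: bit_def)

lemma cond_bit:
  assumes a: "0 < a" and b: "0 < b" and c: "c = a + b" and fx: "\<bar>f x\<bar> \<le> a"
    and pZ: "prob_space pZ" and sZ: "sets pZ = sets borel"
    and AEZ: "AE z in pZ. z \<in> {-b..b}" and EZ: "(\<integral>z. z \<partial>pZ) = 0"
  shows "(\<integral>q. bit f (x, q) \<partial>(pZ \<Otimes>\<^sub>M uniform_measure lborel {-c..c})) = f x / c"
proof -
  define U where "U = uniform_measure lborel {-c..c}"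
  have c0: "c > 0" using a b c by simp
  interpret Z: prob_space pZ by fact
  interpret U: prob_space U unfolding U_def using unif_prob[OF c0] .
  interpret P: pair_prob_space pZ U by unfold_locales
  have zm[measurable]: "(\<lambda>z. z) \<in> borel_measurable pZ"
    using sZ by (simp add: measurable_cong_sets[OF sZ refl])
  have sU: "sets U = sets borel" by (simp add: U_def)
  define h where "h q = (if f x + fst q > snd q then 1 else (-1::real))" for q
  have hb: "bit f (x, q) = h q" for q by (cases q) (simp add: bit_eq h_def)
  have tm: "(\<lambda>t. t) \<in> borel_measurable U"
    by (simp add: measurable_cong_sets[OF sU refl])
  have m1[measurable]: "(\<lambda>q. fst q) \<in> borel_measurable (pZ \<Otimes>\<^sub>M U)"
    by (rule measurable_compose[OF measurable_fst zm])
  have m2[measurable]: "(\<lambda>q. snd q) \<in> borel_measurable (pZ \<Otimes>\<^sub>M U)"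
    by (rule measurable_compose[OF measurable_snd tm])
  have hm: "h \<in> borel_measurable (pZ \<Otimes>\<^sub>M U)"
    unfolding h_def by measurable
  have hint: "integrable (pZ \<Otimes>\<^sub>M U) h"
    by (rule P.integrable_const_bound[where B=1]) (auto simp: h_def hm)
  have "(\<integral>q. h q \<partial>(pZ \<Otimes>\<^sub>M U)) = (\<integral>z. (\<integral>t. h (z, t) \<partial>U) \<partial>pZ)"
    by (rule P.integral_fst'[OF hint, symmetric])
  also have "\<dots> = (\<integral>z. (f x + z) / c \<partial>pZ)"
  proof (rule integral_cong_AE)
    show "(\<lambda>z. \<integral>t. h (z, t) \<partial>U) \<in> borel_measurable pZ"
      using P.integrable_fst'[OF hint] by auto
    show "(\<lambda>z. (f x + z) / c) \<in> borel_measurable pZ" by measurable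
    show "AE z in pZ. (\<integral>t. h (z, t) \<partial>U) = (f x + z) / c"
      using AEZ
    proof (rule AE_mp, intro AE_I2 impI)
      fix z assume "z \<in> {-b..b}"
      then have "-c \<le> f x + z" "f x + z \<le> c" using fx c by auto
      then show "(\<integral>t. h (z, t) \<partial>U) = (f x + z) / c"
        using unif_bit[OF c0, of "f x + z"] by (simp add: h_def U_def)
    qed
  qed
  also have "\<dots> = f x / c"
  proof -
    have zi: "integrable pZ (\<lambda>z. z)"
    proof (rule Z.integrable_const_bound[where B=b])
      show "AE z in pZ. norm z \<le> b" using AEZ by (rule AE_mp) (auto intro!: AE_I2)
    qed (simp add: zm)
    have "(\<integral>z. (f x + z) / c \<partial>pZ) = (\<integral>z. f x + z \<partial>pZ) / c" by simp
    also have "(\<integral>z. f x + z \<partial>pZ) = (\<integral>z. f x \<partial>pZ) + (\<integral>z. z \<partial>pZ)"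
      using zi by (intro Bochner_Integration.integral_add) auto
    also have "\<dots> = f x" using EZ Z.prob_space by simp
    finally show ?thesis .
  qed
  finally show ?thesis unfolding U_def[symmetric] hb .
qed



lemma sq_int_integrable:
  assumes "finite_measure (LD D)" "sq_int D g"
  shows "integrable (LD D) g"
proof -
  interpret finite_measure "LD D" by fact
  show ?thesis
  proof (rule Bochner_Integration.integrable_bound[of _ "\<lambda>s. 1 + (cmod (g s))^2"])
    show "integrable (LD D) (\<lambda>s. 1 + (cmod (g s))^2)" using assms(2) by (auto simp: sq_int_def)
    show "g \<in> borel_measurable (LD D)" using assms(2) by (simp add: sq_int_def)
    have "norm (g s) \<le> norm (1 + (cmod (g s))^2)" for s
    proof (cases "cmod (g s) \<le> 1")
      case True then show ?thesis by (simp add: power2_eq_square) (smt (verit) norm_ge_zero zero_le_mult_iff)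
    next
      case False then show ?thesis using mult_right_mono[of 1 "cmod (g s)" "cmod (g s)"] by (simp add: power2_eq_square)
    qed
    then show "AE x in LD D. norm (g x) \<le> norm (1 + (cmod (g x))^2)" by auto
  qed
qed

context
  fixes D :: "'a::euclidean_space set" and a b c :: real and \<phi> :: "nat \<Rightarrow> 'a \<Rightarrow> complex"
    and f pX :: "'a \<Rightarrow> real" and pZ :: "real measure" and j :: nat
  assumes cD: "compact D" and a: "0 < a" and b: "0 < b" and c: "c = a + b"
    and ob: "orthonormal_basis_L2 D \<phi>"
    and fm: "f \<in> borel_measurable (LD D)" and fb: "\<forall>x\<in>D. \<bar>f x\<bar> \<le> a"
    and pm: "pX \<in> borel_measurable (LD D)" and ppos: "\<forall>x\<in>D. pX x > 0"
    and pD: "prob_space (density (LD D) (\<lambda>x. ennreal (pX x)))"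
    and pZ: "prob_space pZ" and sZ: "sets pZ = sets borel"
    and AEZ: "AE z in pZ. z \<in> {-b..b}" and EZ: "(\<integral>z. z \<partial>pZ) = 0"
begin

definition "Dn = density (LD D) (\<lambda>x. ennreal (pX x))"
definition "U = uniform_measure lborel {-c..c}"
definition "Q = pZ \<Otimes>\<^sub>M U"
definition "w s = complex_of_real c * (cnj (\<phi> j (fst s)) / complex_of_real (pX (fst s)) * complex_of_real (bit f s))"

lemma c0: "c > 0" using a b c by simp

lemma S_eq: "sample_measure D pX pZ c = Dn \<Otimes>\<^sub>M Q"
  by (simp add: sample_measure_def Dn_def Q_def U_def)

lemma probs: "prob_space Dn" "prob_space U" "prob_space Q" "prob_space (Dn \<Otimes>\<^sub>M Q)"
proof -
  show 1: "prob_space Dn" using pD by (simp add: Dn_def)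
  show 2: "prob_space U" using unif_prob[OF c0] by (simp add: U_def)
  show 3: "prob_space Q" unfolding Q_def by (rule prob_space_pair[OF pZ 2])
  show "prob_space (Dn \<Otimes>\<^sub>M Q)" by (rule prob_space_pair[OF 1 3])
qed

lemma space_Dn: "space Dn = D"
  by (simp add: Dn_def LD_facts(1)[OF cD])

lemma sets_Dn: "sets Dn = sets (LD D)" by (simp add: Dn_def)

lemma meas_Dn: "g \<in> borel_measurable (LD D) \<Longrightarrow> g \<in> borel_measurable Dn"
  by (simp add: measurable_cong_sets[OF sets_Dn refl])

lemma phim: "\<phi> k \<in> borel_measurable (LD D)"
  using ob by (simp add: orthonormal_basis_L2_def sq_int_def)

lemma bitm: "bit f \<in> borel_measurable (Dn \<Otimes>\<^sub>M Q)"
proof -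
  have zm: "(\<lambda>z. z) \<in> borel_measurable pZ"
    by (simp add: measurable_cong_sets[OF sZ refl])
  have tm: "(\<lambda>t. t) \<in> borel_measurable U"
  proof -
    have sU: "sets U = sets borel" by (simp add: U_def)
    show ?thesis by (simp add: measurable_cong_sets[OF sU refl])
  qed
  have [measurable]: "(\<lambda>s. f (fst s)) \<in> borel_measurable (Dn \<Otimes>\<^sub>M Q)"
    by (rule measurable_compose[OF measurable_fst meas_Dn[OF fm]])
  have [measurable]: "(\<lambda>s. fst (snd s)) \<in> borel_measurable (Dn \<Otimes>\<^sub>M Q)"
    unfolding Q_def by (rule measurable_compose[OF measurable_snd measurable_compose[OF measurable_fst zm]])
  have [measurable]: "(\<lambda>s. snd (snd s)) \<in> borel_measurable (Dn \<Otimes>\<^sub>M Q)"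
    unfolding Q_def by (rule measurable_compose[OF measurable_snd measurable_compose[OF measurable_snd tm]])
  have eq: "bit f = (\<lambda>s. if f (fst s) + fst (snd s) > snd (snd s) then 1 else -1)"
    by (auto simp: fun_eq_iff bit_def split: prod.splits)
  show ?thesis unfolding eq by measurable
qed

lemma wm: "w \<in> borel_measurable (Dn \<Otimes>\<^sub>M Q)"
proof -
  have [measurable]: "(\<lambda>s. \<phi> j (fst s)) \<in> borel_measurable (Dn \<Otimes>\<^sub>M Q)"
    by (rule measurable_compose[OF measurable_fst meas_Dn[OF phim]])
  have [measurable]: "(\<lambda>s. pX (fst s)) \<in> borel_measurable (Dn \<Otimes>\<^sub>M Q)"
    by (rule measurable_compose[OF measurable_fst meas_Dn[OF pm]])
  have [measurable]: "bit f \<in> borel_measurable (Dn \<Otimes>\<^sub>M Q)" by (rule bitm)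
  show ?thesis unfolding w_def by measurable
qed

lemma nn_fst_density:
  assumes Gm: "G \<in> borel_measurable (LD D)"
  shows "(\<integral>\<^sup>+s. ennreal (G (fst s)) \<partial>(Dn \<Otimes>\<^sub>M Q)) = (\<integral>\<^sup>+x. ennreal (pX x) * ennreal (G x) \<partial>LD D)"
proof -
  interpret Q: prob_space Q by (rule probs(3))
  have "(\<integral>\<^sup>+s. ennreal (G (fst s)) \<partial>(Dn \<Otimes>\<^sub>M Q)) = (\<integral>\<^sup>+x. ennreal (G x) \<partial>distr (Dn \<Otimes>\<^sub>M Q) Dn fst)"
  proof (rule nn_integral_distr[symmetric])
    have GD[measurable]: "G \<in> borel_measurable Dn" by (rule meas_Dn[OF Gm])
    show "fst \<in> Dn \<Otimes>\<^sub>M Q \<rightarrow>\<^sub>M Dn" by simp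
    show "(\<lambda>x. ennreal (G x)) \<in> borel_measurable (distr (Dn \<Otimes>\<^sub>M Q) Dn fst)"
      unfolding Q.distr_pair_fst by measurable
  qed
  also have "\<dots> = (\<integral>\<^sup>+x. ennreal (G x) \<partial>Dn)" by (simp add: Q.distr_pair_fst)
  also have "\<dots> = (\<integral>\<^sup>+x. ennreal (pX x) * ennreal (G x) \<partial>LD D)"
    unfolding Dn_def using Gm pm by (intro nn_integral_density) auto
  finally show ?thesis .
qed

lemma bit_abs: "\<bar>bit f s\<bar> = 1"
  by (auto simp: bit_def split: prod.splits)

lemma w_norm: "cmod (w s) = c * cmod (\<phi> j (fst s)) / \<bar>pX (fst s)\<bar>"
  using c0 by (simp add: w_def norm_mult norm_divide bit_abs)

lemma nn_w2:
  "(\<integral>\<^sup>+s. ennreal ((cmod (w s))\<^sup>2) \<partial>(Dn \<Otimes>\<^sub>M Q)) = ennreal (c\<^sup>2) * (\<integral>\<^sup>+x. ennreal ((cmod (\<phi> j x))\<^sup>2 / pX x) \<partial>LD D)"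
proof -
  define G where "G x = c\<^sup>2 * (cmod (\<phi> j x))\<^sup>2 / (pX x)\<^sup>2" for x
  have Gm: "G \<in> borel_measurable (LD D)" unfolding G_def using phim pm by measurable
  have "(\<integral>\<^sup>+s. ennreal ((cmod (w s))\<^sup>2) \<partial>(Dn \<Otimes>\<^sub>M Q)) = (\<integral>\<^sup>+s. ennreal (G (fst s)) \<partial>(Dn \<Otimes>\<^sub>M Q))"
    by (simp add: w_norm G_def power_divide power_mult_distrib)
  also have "\<dots> = (\<integral>\<^sup>+x. ennreal (pX x) * ennreal (G x) \<partial>LD D)" by (rule nn_fst_density[OF Gm])
  also have "\<dots> = (\<integral>\<^sup>+x. ennreal (c\<^sup>2) * ennreal ((cmod (\<phi> j x))\<^sup>2 / pX x) \<partial>LD D)"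
  proof (rule nn_integral_cong)
    fix x assume "x \<in> space (LD D)"
    then have p: "pX x > 0" using ppos LD_facts(1)[OF cD] by auto
    have "ennreal (pX x) * ennreal (G x) = ennreal (pX x * G x)"
      using p by (intro ennreal_mult[symmetric]) (auto simp: G_def)
    also have "pX x * G x = c\<^sup>2 * ((cmod (\<phi> j x))\<^sup>2 / pX x)"
      using p by (simp add: G_def power2_eq_square field_simps)
    also have "ennreal \<dots> = ennreal (c\<^sup>2) * ennreal ((cmod (\<phi> j x))\<^sup>2 / pX x)"
      using p by (intro ennreal_mult) auto
    finally show "ennreal (pX x) * ennreal (G x) = ennreal (c\<^sup>2) * ennreal ((cmod (\<phi> j x))\<^sup>2 / pX x)" .
  qed
  also have "\<dots> = ennreal (c\<^sup>2) * (\<integral>\<^sup>+x. ennreal ((cmod (\<phi> j x))\<^sup>2 / pX x) \<partial>LD D)"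
    using phim pm by (intro nn_integral_cmult) measurable
  finally show ?thesis .
qed

lemma w_int: "integrable (Dn \<Otimes>\<^sub>M Q) w"
proof (rule integrableI_bounded[OF wm])
  define G where "G x = c * cmod (\<phi> j x) / \<bar>pX x\<bar>" for x
  have Gm: "G \<in> borel_measurable (LD D)" unfolding G_def using phim pm by measurable
  have pint: "integrable (LD D) (\<phi> j)"
    using ob LD_facts(2)[OF cD] by (intro sq_int_integrable) (auto simp: orthonormal_basis_L2_def)
  have "(\<integral>\<^sup>+s. ennreal (norm (w s)) \<partial>(Dn \<Otimes>\<^sub>M Q)) = (\<integral>\<^sup>+s. ennreal (G (fst s)) \<partial>(Dn \<Otimes>\<^sub>M Q))"
    by (simp add: w_norm G_def)
  also have "\<dots> = (\<integral>\<^sup>+x. ennreal (pX x) * ennreal (G x) \<partial>LD D)" by (rule nn_fst_density[OF Gm])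
  also have "\<dots> = (\<integral>\<^sup>+x. ennreal c * ennreal (norm (\<phi> j x)) \<partial>LD D)"
  proof (rule nn_integral_cong)
    fix x assume "x \<in> space (LD D)"
    then have p: "pX x > 0" using ppos LD_facts(1)[OF cD] by auto
    have "ennreal (pX x) * ennreal (G x) = ennreal (pX x * G x)"
      using p c0 by (intro ennreal_mult[symmetric]) (auto simp: G_def)
    also have "pX x * G x = c * norm (\<phi> j x)"
      using p by (simp add: G_def field_simps)
    also have "ennreal \<dots> = ennreal c * ennreal (norm (\<phi> j x))"
      using c0 by (simp add: ennreal_mult)
    finally show "ennreal (pX x) * ennreal (G x) = ennreal c * ennreal (norm (\<phi> j x))" .
  qed
  also have "\<dots> = ennreal c * (\<integral>\<^sup>+x. ennreal (norm (\<phi> j x)) \<partial>LD D)"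
    using phim by (intro nn_integral_cmult) measurable
  also have "\<dots> < \<infinity>"
    using pint by (simp add: integrable_iff_bounded ennreal_mult_less_top)
  finally show "(\<integral>\<^sup>+s. ennreal (norm (w s)) \<partial>(Dn \<Otimes>\<^sub>M Q)) < \<infinity>" .
qed

lemma w_mean: "(\<integral>s. w s \<partial>(Dn \<Otimes>\<^sub>M Q)) = coef D \<phi> f j"
proof -
  interpret Dn: prob_space Dn by (rule probs(1))
  interpret Q: prob_space Q by (rule probs(3))
  interpret P: pair_prob_space Dn Q by unfold_locales
  have "(\<integral>s. w s \<partial>(Dn \<Otimes>\<^sub>M Q)) = (\<integral>x. (\<integral>q. w (x, q) \<partial>Q) \<partial>Dn)"
    by (rule P.integral_fst'[OF w_int, symmetric])
  also have "\<dots> = (\<integral>x. cnj (\<phi> j x) * complex_of_real (f x) / complex_of_real (pX x) \<partial>Dn)"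
  proof (rule Bochner_Integration.integral_cong[OF refl])
    fix x assume x: "x \<in> space Dn"
    then have xD: "x \<in> D" by (simp add: space_Dn)
    have bm: "(\<lambda>q. bit f (x, q)) \<in> borel_measurable Q"
      using measurable_compose[OF measurable_Pair1'[OF x] bitm] by (simp add: comp_def)
    have bi: "integrable Q (\<lambda>q. bit f (x, q))"
      by (rule Q.integrable_const_bound[where B=1]) (auto simp: bit_abs bm)
    have cb: "(\<integral>q. bit f (x, q) \<partial>Q) = f x / c"
      unfolding Q_def U_def
      by (rule cond_bit[OF a b c _ pZ sZ AEZ EZ]) (use fb xD in auto)
    have "(\<integral>q. w (x, q) \<partial>Q) = (\<integral>q. (complex_of_real c * (cnj (\<phi> j x) / complex_of_real (pX x))) * complex_of_real (bit f (x, q)) \<partial>Q)"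
      by (simp add: w_def mult.assoc)
    also have "\<dots> = (complex_of_real c * (cnj (\<phi> j x) / complex_of_real (pX x))) * complex_of_real (\<integral>q. bit f (x, q) \<partial>Q)"
      using bi by (simp add: integral_bounded_linear[OF bounded_linear_of_real])
    also have "\<dots> = cnj (\<phi> j x) * complex_of_real (f x) / complex_of_real (pX x)"
      unfolding cb using c0 by (simp add: field_simps)
    finally show "(\<integral>q. w (x, q) \<partial>Q) = cnj (\<phi> j x) * complex_of_real (f x) / complex_of_real (pX x)" .
  qed
  also have "\<dots> = (\<integral>x. pX x *\<^sub>R (cnj (\<phi> j x) * complex_of_real (f x) / complex_of_real (pX x)) \<partial>LD D)"
    unfolding Dn_def using phim pm fm ppos LD_facts(1)[OF cD]
    by (intro integral_density) (auto intro!: AE_I2 less_imp_le)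
  also have "\<dots> = (\<integral>x. complex_of_real (f x) * cnj (\<phi> j x) \<partial>LD D)"
  proof (rule Bochner_Integration.integral_cong[OF refl])
    fix x assume "x \<in> space (LD D)"
    then have p: "pX x > 0" using ppos LD_facts(1)[OF cD] by auto
    then show "pX x *\<^sub>R (cnj (\<phi> j x) * complex_of_real (f x) / complex_of_real (pX x)) = complex_of_real (f x) * cnj (\<phi> j x)"
      by (simp add: scaleR_conv_of_real field_simps)
  qed
  also have "\<dots> = coef D \<phi> f j" by (simp add: coef_def L2_inner_def)
  finally show ?thesis .
qed

lemma coef_hat_w: "coef_hat c n \<phi> pX f \<omega> j = complex_of_real (1 / real n) * (\<Sum>i<n. w (\<omega> i))"
proof -
  have "(\<Sum>i<n. w (\<omega> i)) = complex_of_real c * (\<Sum>i<n. cnj (\<phi> j (fst (\<omega> i))) / complex_of_real (pX (fst (\<omega> i)))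
                 * complex_of_real (bit f (\<omega> i)))"
    unfolding w_def by (simp add: sum_distrib_left)
  then show ?thesis unfolding coef_hat_def by simp
qed

lemma per_j:
  assumes n: "n \<ge> 1"
  shows "(\<integral>\<^sup>+\<omega>. ennreal ((cmod (coef D \<phi> f j - coef_hat c n \<phi> pX f \<omega> j))\<^sup>2) \<partial>data_measure D pX pZ c n)
     \<le> ennreal (c\<^sup>2 / real n) * (\<integral>\<^sup>+x. ennreal ((cmod (\<phi> j x))\<^sup>2 / pX x) \<partial>LD D)"
proof (cases "(\<integral>\<^sup>+x. ennreal ((cmod (\<phi> j x))\<^sup>2 / pX x) \<partial>LD D) = \<infinity>")
  case True
  have "c\<^sup>2 / real n > 0" using c0 n by simp
  then show ?thesis using True c0 n by (simp add: ennreal_mult_top)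
next
  case False
  define I where "I = (\<integral>\<^sup>+x. ennreal ((cmod (\<phi> j x))\<^sup>2 / pX x) \<partial>LD D)"
  have fin: "(\<integral>\<^sup>+s. ennreal ((cmod (w s))\<^sup>2) \<partial>(Dn \<Otimes>\<^sub>M Q)) < \<infinity>"
    using False unfolding nn_w2 by (simp add: ennreal_mult_less_top less_top)
  have w2m: "(\<lambda>s. (cmod (w s))\<^sup>2) \<in> borel_measurable (Dn \<Otimes>\<^sub>M Q)" using wm by measurable
  have w2: "integrable (Dn \<Otimes>\<^sub>M Q) (\<lambda>s. (cmod (w s))\<^sup>2)"
    by (rule integrableI_bounded[OF w2m]) (use fin in simp)
  have "(\<integral>\<^sup>+\<omega>. ennreal ((cmod (coef D \<phi> f j - coef_hat c n \<phi> pX f \<omega> j))\<^sup>2) \<partial>data_measure D pX pZ c n)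
     = (\<integral>\<^sup>+\<omega>. ennreal ((cmod ((\<integral>s. w s \<partial>(Dn \<Otimes>\<^sub>M Q)) - complex_of_real (1 / real n) * (\<Sum>i<n. w (\<omega> i))))\<^sup>2) \<partial>PiM {..<n} (\<lambda>_. Dn \<Otimes>\<^sub>M Q))"
    unfolding data_measure_def S_eq w_mean coef_hat_w ..
  also have "\<dots> \<le> ennreal ((1 / real n) * (\<integral>s. (cmod (w s))\<^sup>2 \<partial>(Dn \<Otimes>\<^sub>M Q)))"
    by (rule cvar[OF probs(4) wm w2 n])
  also have "\<dots> = ennreal (1 / real n) * ennreal (\<integral>s. (cmod (w s))\<^sup>2 \<partial>(Dn \<Otimes>\<^sub>M Q))"
    by (intro ennreal_mult) auto
  also have "ennreal (\<integral>s. (cmod (w s))\<^sup>2 \<partial>(Dn \<Otimes>\<^sub>M Q)) = (\<integral>\<^sup>+s. ennreal ((cmod (w s))\<^sup>2) \<partial>(Dn \<Otimes>\<^sub>M Q))"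
    by (rule nn_integral_eq_integral[OF w2, symmetric]) auto
  also have "ennreal (1 / real n) * \<dots> = ennreal (c\<^sup>2 / real n) * I"
    unfolding nn_w2 I_def mult.assoc[symmetric] by (simp add: ennreal_mult[symmetric])
  finally show ?thesis unfolding I_def .
qed

lemma DM_prob: "prob_space (data_measure D pX pZ c n)"
  unfolding data_measure_def S_eq by (rule prob_space_PiM) (rule probs(4))

lemma coef_hat_meas: "(\<lambda>\<omega>. coef_hat c n \<phi> pX f \<omega> j) \<in> borel_measurable (data_measure D pX pZ c n)"
proof -
  have [measurable]: "w \<in> borel_measurable (Dn \<Otimes>\<^sub>M Q)" by (rule wm)
  show ?thesis unfolding data_measure_def S_eq coef_hat_w by measurable
qed

end



theorem theorem1:
  fixes D :: "'a::euclidean_space set"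
    and a b c :: real
    and \<phi> :: "nat \<Rightarrow> 'a \<Rightarrow> complex"
    and f pX :: "'a \<Rightarrow> real"
    and pZ :: "real measure"
    and n m :: nat
  assumes "compact D"
    and "0 < a" and "0 < b" and "c = a + b"
    and "orthonormal_basis_L2 D \<phi>"
    and "f \<in> borel_measurable (LD D)" and "\<forall>x\<in>D. \<bar>f x\<bar> \<le> a"
    and "pX \<in> borel_measurable (LD D)" and "\<forall>x\<in>D. pX x > 0"
    and "prob_space (density (LD D) (\<lambda>x. ennreal (pX x)))"
    and "prob_space pZ" and "sets pZ = sets borel"
    and "AE z in pZ. z \<in> {-b..b}" and "(\<integral>z. z \<partial>pZ) = 0"
    and "n \<ge> 1" and "m \<ge> 1"
  shows "((\<integral>\<^sup>+ \<omega>. (\<integral>\<^sup>+ x. ennreal ((cmod (complex_of_real (f x) - f_hat c n m \<phi> pX f \<omega> x))\<^sup>2) \<partial>LD D)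
             \<partial>data_measure D pX pZ c n)
         \<le> ennreal (c\<^sup>2 / real n) *
             (\<Sum>j<m. \<integral>\<^sup>+ x. ennreal ((cmod (\<phi> j x))\<^sup>2 / pX x) \<partial>LD D)
           + ennreal (approx_err D \<phi> f m))
     \<and> (\<forall>k. approx_err D \<phi> f k \<ge> 0)
     \<and> antimono (approx_err D \<phi> f)
     \<and> approx_err D \<phi> f \<longlonglongrightarrow> 0"
proof -
  note A = assms(1-14)
  note cD = assms(1) and ob = assms(5) and n = assms(15)
  have Fs: "sq_int D (\<lambda>x. complex_of_real (f x))"
    by (rule F_sq_int[OF assms(1,6,7)])
  have sq: "\<And>k. sq_int D (\<phi> k)"
    using ob by (auto simp: orthonormal_basis_L2_def)
  define N where "N = (\<integral>x. (cmod (complex_of_real (f x)))\<^sup>2 \<partial>LD D)"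
  have ae: "approx_err D \<phi> f k = N - (\<Sum>j<k. (cmod (coef D \<phi> f j))\<^sup>2)" for k
    unfolding N_def by (rule parseval(1)[OF ob Fs])
  have nn: "approx_err D \<phi> f k \<ge> 0" for k
  proof -
    have "approx_err D \<phi> f k = (\<integral>x. (cmod (of_real (f x) - (\<Sum>j<k. coef D \<phi> f j * \<phi> j x)))\<^sup>2 \<partial>LD D)"
      using key[OF ob Fs, where m=k and \<beta>="coef D \<phi> f"] unfolding ae N_def by simp
    also have "\<dots> \<ge> 0" by simp
    finally show ?thesis by simp
  qed
  have anti: "antimono (approx_err D \<phi> f)"
  proof (rule antimonoI)
    fix k l :: nat assume "k \<le> l"
    then have "(\<Sum>j<k. (cmod (coef D \<phi> f j))\<^sup>2) \<le> (\<Sum>j<l. (cmod (coef D \<phi> f j))\<^sup>2)"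
      by (intro sum_mono2) auto
    then show "approx_err D \<phi> f l \<le> approx_err D \<phi> f k" unfolding ae by simp
  qed
  have lim: "approx_err D \<phi> f \<longlonglongrightarrow> 0" by (rule parseval(2)[OF ob Fs])
  define \<beta> where "\<beta> \<omega> j = coef_hat c n \<phi> pX f \<omega> j" for \<omega> j
  have inner: "(\<integral>\<^sup>+ x. ennreal ((cmod (complex_of_real (f x) - f_hat c n m \<phi> pX f \<omega> x))\<^sup>2) \<partial>LD D)
      = ennreal (approx_err D \<phi> f m) + (\<Sum>j<m. ennreal ((cmod (coef D \<phi> f j - \<beta> \<omega> j))\<^sup>2))" for \<omega>
  proof -
    have fh: "f_hat c n m \<phi> pX f \<omega> = (\<lambda>x. \<Sum>j<m. \<beta> \<omega> j * \<phi> j x)"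
      by (simp add: fun_eq_iff f_hat_def \<beta>_def)
    have Rs: "sq_int D (\<lambda>x. complex_of_real (f x) - (\<Sum>j<m. \<beta> \<omega> j * \<phi> j x))"
      by (intro sq_int_diff Fs sq_int_sum sq)
    have "(\<integral>\<^sup>+ x. ennreal ((cmod (complex_of_real (f x) - f_hat c n m \<phi> pX f \<omega> x))\<^sup>2) \<partial>LD D)
      = ennreal (\<integral>x. (cmod (complex_of_real (f x) - (\<Sum>j<m. \<beta> \<omega> j * \<phi> j x)))\<^sup>2 \<partial>LD D)"
      unfolding fh by (rule nn_integral_eq_integral[OF sq_int_int[OF Rs]]) auto
    also have "(\<integral>x. (cmod (complex_of_real (f x) - (\<Sum>j<m. \<beta> \<omega> j * \<phi> j x)))\<^sup>2 \<partial>LD D)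
      = approx_err D \<phi> f m + (\<Sum>j<m. (cmod (coef D \<phi> f j - \<beta> \<omega> j))\<^sup>2)"
      unfolding key[OF ob Fs] ae N_def by simp
    also have "ennreal \<dots> = ennreal (approx_err D \<phi> f m) + (\<Sum>j<m. ennreal ((cmod (coef D \<phi> f j - \<beta> \<omega> j))\<^sup>2))"
      using nn by (simp add: ennreal_plus sum_nonneg)
    finally show ?thesis .
  qed
  interpret DM: prob_space "data_measure D pX pZ c n" by (rule DM_prob[OF A])
  have bm[measurable]: "(\<lambda>\<omega>. \<beta> \<omega> j) \<in> borel_measurable (data_measure D pX pZ c n)" for j
    unfolding \<beta>_def by (rule coef_hat_meas[OF A])
  have "(\<integral>\<^sup>+ \<omega>. (\<integral>\<^sup>+ x. ennreal ((cmod (complex_of_real (f x) - f_hat c n m \<phi> pX f \<omega> x))\<^sup>2) \<partial>LD D)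
             \<partial>data_measure D pX pZ c n)
     = (\<integral>\<^sup>+ \<omega>. ennreal (approx_err D \<phi> f m) + (\<Sum>j<m. ennreal ((cmod (coef D \<phi> f j - \<beta> \<omega> j))\<^sup>2)) \<partial>data_measure D pX pZ c n)"
    unfolding inner ..
  also have "\<dots> = ennreal (approx_err D \<phi> f m) + (\<Sum>j<m. \<integral>\<^sup>+ \<omega>. ennreal ((cmod (coef D \<phi> f j - \<beta> \<omega> j))\<^sup>2) \<partial>data_measure D pX pZ c n)"
    apply (subst nn_integral_add, measurable)
    apply (subst nn_integral_sum, measurable)
    apply (simp only: nn_integral_const DM.emeasure_space_1 mult_1_right)
    done
  also have "\<dots> \<le> ennreal (approx_err D \<phi> f m) + (\<Sum>j<m. ennreal (c\<^sup>2 / real n) * (\<integral>\<^sup>+x. ennreal ((cmod (\<phi> j x))\<^sup>2 / pX x) \<partial>LD D))"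
    unfolding \<beta>_def by (intro add_left_mono sum_mono per_j[OF A n])
  also have "\<dots> = ennreal (c\<^sup>2 / real n) * (\<Sum>j<m. \<integral>\<^sup>+ x. ennreal ((cmod (\<phi> j x))\<^sup>2 / pX x) \<partial>LD D)
           + ennreal (approx_err D \<phi> f m)"
    by (simp add: sum_distrib_left add.commute)
  finally show ?thesis using nn anti lim by blast
qed


end
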